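(* Let $\mathfrak h\subset\mathfrak g$ be a Lie subalgebra, $\mathfrak p$ its $h_0$-orthogonal complement, and let $\Psi$ be the $h_0$-orthogonal projection onto $\mathfrak h$, so $\Phi_t=(I-t\Psi)^{-1}$ and $h_t(X,Y)=h_0\big(\tfrac1{1-t}X^{\mathfrak h}+X^{\mathfrak p},Y\big)$. Then for all $X,Y\in\mathfrak g$ and all $t<1$, $$\kappa(t)=\tfrac14|[X,Y]|^2-\tfrac34|[X,Y]^{\mathfrak h}|^2t+\tfrac34|[X^{\mathfrak h},Y^{\mathfrak h}]|^2t^2-\tfrac14|[X^{\mathfrak h},Y^{\mathfrak h}]|^2t^3-\tfrac34|[X^{\mathfrak p},Y^{\mathfrak p}]^{\mathfrak h}|^2\frac{t^2}{1-t}.$$ In particular, if $\mathfrak h$ is abelian, $\kappa(t)=\tfrac14|[X,Y]|^2-\tfrac34|[X,Y]^{\mathfrak h}|^2\,\frac{t}{1-t}$ for $-\infty<t<1$.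
   Context: $G$ is a compact Lie group with Lie algebra $\mathfrak g$ and bi-invariant metric $h_0=\langle\cdot,\cdot\rangle$, $|Z|^2=\langle Z,Z\rangle$. For $Z\in\mathfrak g$, $Z^{\mathfrak h}$ and $Z^{\mathfrak p}$ denote the $h_0$-orthogonal projections onto $\mathfrak h$ and $\mathfrak p=\mathfrak h^\perp$. $h_t$ is the left-invariant metric with $h_t(X,Y)=\langle\Phi_tX,Y\rangle$ on $\mathfrak g$. The unnormalized sectional curvature is $k_h(Z_1,Z_2)=h(R_h(Z_1,Z_2)Z_2,Z_1)$, and for fixed $X,Y$, $\kappa(t)=k_{h_t}(\Phi_t^{-1}X,\Phi_t^{-1}Y)$. *)

theory Defs
  imports "HOL-Analysis.Analysis"
begin

text \<open>Algebraic model of a compact Lie group with bi-invariant metric: the Lie algebra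
  is a finite-dimensional real inner product space (inner product = h0) with a Lie
  bracket b for which ad is skew-adjoint.  Left-invariant metrics are forms on the
  Lie algebra; Levi-Civita connection and curvature of left-invariant fields are
  given by the Koszul formula.\<close>

definition lie_bracket :: "('a::euclidean_space \<Rightarrow> 'a \<Rightarrow> 'a) \<Rightarrow> bool" where
  "lie_bracket b \<longleftrightarrow> bilinear b \<and> (\<forall>x y. b x y = - b y x)
     \<and> (\<forall>x y z. b x (b y z) + b y (b z x) + b z (b x y) = 0)"

definition bi_invariant :: "('a::euclidean_space \<Rightarrow> 'a \<Rightarrow> 'a) \<Rightarrow> bool" where
  "bi_invariant b \<longleftrightarrow> (\<forall>x y z. inner (b x y) z = inner x (b y z))"

definition lie_subalgebra :: "('a::euclidean_space \<Rightarrow> 'a \<Rightarrow> 'a) \<Rightarrow> 'a set \<Rightarrow> bool" where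
  "lie_subalgebra b H \<longleftrightarrow> subspace H \<and> (\<forall>x\<in>H. \<forall>y\<in>H. b x y \<in> H)"

definition oproj :: "'a::euclidean_space set \<Rightarrow> 'a \<Rightarrow> 'a" where
  "oproj H x = (THE y. y \<in> H \<and> (\<forall>z\<in>H. inner (x - y) z = 0))"

text \<open>Levi-Civita connection of the left-invariant metric g on left-invariant fields
  (Koszul formula): 2 g(nabla_X Y, W) = g([X,Y],W) - g([Y,W],X) + g([W,X],Y).\<close>
definition lc_nabla :: "('a::euclidean_space \<Rightarrow> 'a \<Rightarrow> 'a) \<Rightarrow> ('a \<Rightarrow> 'a \<Rightarrow> real) \<Rightarrow> 'a \<Rightarrow> 'a \<Rightarrow> 'a" where
  "lc_nabla b g X Y = (THE Z. \<forall>W. g Z W = (g (b X Y) W - g (b Y W) X + g (b W X) Y) / 2)"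

definition curv :: "('a::euclidean_space \<Rightarrow> 'a \<Rightarrow> 'a) \<Rightarrow> ('a \<Rightarrow> 'a \<Rightarrow> real) \<Rightarrow> 'a \<Rightarrow> 'a \<Rightarrow> 'a \<Rightarrow> 'a" where
  "curv b g X Y Z = lc_nabla b g X (lc_nabla b g Y Z) - lc_nabla b g Y (lc_nabla b g X Z)
     - lc_nabla b g (b X Y) Z"

text \<open>Unnormalized sectional curvature k_g(Z1,Z2) = g(R(Z1,Z2)Z2, Z1).\<close>
definition sec_curv :: "('a::euclidean_space \<Rightarrow> 'a \<Rightarrow> 'a) \<Rightarrow> ('a \<Rightarrow> 'a \<Rightarrow> real) \<Rightarrow> 'a \<Rightarrow> 'a \<Rightarrow> real" where
  "sec_curv b g Z1 Z2 = g (curv b g Z1 Z2 Z2) Z1"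

text \<open>Phi_t = (I - t Psi)^{-1}, i.e. Phi_t X = X^h/(1-t) + X^p, and its inverse I - t Psi.\<close>
definition Phi :: "'a::euclidean_space set \<Rightarrow> real \<Rightarrow> 'a \<Rightarrow> 'a" where
  "Phi H t X = (1 / (1 - t)) *\<^sub>R oproj H X + (X - oproj H X)"

definition Phi_inv :: "'a::euclidean_space set \<Rightarrow> real \<Rightarrow> 'a \<Rightarrow> 'a" where
  "Phi_inv H t X = X - t *\<^sub>R oproj H X"

definition ht :: "'a::euclidean_space set \<Rightarrow> real \<Rightarrow> 'a \<Rightarrow> 'a \<Rightarrow> real" where
  "ht H t X Y = inner (Phi H t X) Y"

definition kappa :: "('a::euclidean_space \<Rightarrow> 'a \<Rightarrow> 'a) \<Rightarrow> 'a set \<Rightarrow> 'a \<Rightarrow> 'a \<Rightarrow> real \<Rightarrow> real" where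
  "kappa b H X Y t = sec_curv b (ht H t) (Phi_inv H t X) (Phi_inv H t Y)"

end

theory Submission
  imports Defs
begin

definition perp :: "'a::euclidean_space set \<Rightarrow> 'a \<Rightarrow> bool" where
  "perp H v \<longleftrightarrow> (\<forall>z\<in>H. inner v z = 0)"

lemma final_scalar:
  fixes u1 u2 u3 r R :: "'a::real_inner" and t a :: real
  assumes a: "a = 1 - t" and t1: "t < 1"
   and o1: "inner u1 u2 = 0" and o2: "inner u1 u3 = 0" and o3: "inner u1 R = 0"
   and o4: "inner r u2 = 0" and o5: "inner r u3 = 0" and o6: "inner r R = 0"
  shows "- (t^2) * (inner u1 (r + R) - inner u2 u3)
     - (3/4) * inner ((1/a) *\<^sub>R (a^2 *\<^sub>R u1 + r) + (a *\<^sub>R u2 + a *\<^sub>R u3 + R)) ((a^2 *\<^sub>R u1 + r) + (a *\<^sub>R u2 + a *\<^sub>R u3 + R))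
     + (t^2/4) * inner (u3 - u2) (u3 - u2)
     + (1/2) * inner ((a^2 *\<^sub>R u1 + r) + (a *\<^sub>R u2 + a *\<^sub>R u3 + R)) ((2*a) *\<^sub>R u1 + (a+1) *\<^sub>R (u2 + u3) + 2 *\<^sub>R (r + R))
   = (1/4) * inner (u1 + u2 + u3 + r + R) (u1 + u2 + u3 + r + R)
     - (3/4) * inner (u1 + r) (u1 + r) * t + (3/4) * inner u1 u1 * t^2 - (1/4) * inner u1 u1 * t^3
     - (3/4) * inner r r * (t^2 / (1 - t))"
proof -
  have o1': "inner u2 u1 = 0" "inner u3 u1 = 0" "inner R u1 = 0" "inner u2 r = 0" "inner u3 r = 0" "inner R r = 0"
    using o1 o2 o3 o4 o5 o6 by (simp_all add: inner_commute)
  have c: "inner r u1 = inner u1 r" "inner u3 u2 = inner u2 u3" "inner R u2 = inner u2 R" "inner R u3 = inner u3 R"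
    by (simp_all add: inner_commute)
  have an: "a \<noteq> 0" using a t1 by simp
  have tt: "t = 1 - a" using a by simp
  show ?thesis
    apply (simp add: inner_add_left inner_add_right inner_diff_left inner_diff_right o1 o2 o3 o4 o5 o6 o1' c)
    apply (simp add: tt)
    apply (simp add: an field_simps power2_eq_square power3_eq_cube)
    done
qed

locale liesetup =
  fixes b :: "'a::euclidean_space \<Rightarrow> 'a \<Rightarrow> 'a" and H :: "'a set"
  assumes LB: "lie_bracket b" and BI: "bi_invariant b" and SA: "lie_subalgebra b H"
begin

lemma bil: "bilinear b" using LB unfolding lie_bracket_def by blast
lemma anti: "b x y = - b y x" using LB unfolding lie_bracket_def by blast
lemma jac: "b x (b y z) + b y (b z x) + b z (b x y) = 0" using LB unfolding lie_bracket_def by blast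
lemma bi: "inner (b x y) z = inner x (b y z)" using BI unfolding bi_invariant_def by auto
lemma sub: "subspace H" using SA unfolding lie_subalgebra_def by auto
lemma clos: "x \<in> H \<Longrightarrow> y \<in> H \<Longrightarrow> b x y \<in> H" using SA unfolding lie_subalgebra_def by auto

lemma bself[simp]: "b x x = 0"
proof -
  have "b x x + b x x = 0" using anti[of x x] by (metis add.right_inverse)
  then have "2 *\<^sub>R b x x = 0" by (simp add: scaleR_2)
  then show ?thesis by simp
qed

lemmas bsimps = bilinear_ladd[OF bil] bilinear_radd[OF bil] bilinear_lmul[OF bil] bilinear_rmul[OF bil]
  bilinear_lneg[OF bil] bilinear_rneg[OF bil] bilinear_lsub[OF bil] bilinear_rsub[OF bil]
  bilinear_lzero[OF bil] bilinear_rzero[OF bil]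

lemma P_char: "oproj H x \<in> H \<and> (\<forall>z\<in>H. inner (x - oproj H x) z = 0)"
proof -
  obtain y z where y: "y \<in> span H" and z: "\<And>w. w \<in> span H \<Longrightarrow> orthogonal z w" and xyz: "x = y + z"
    using orthogonal_subspace_decomp_exists by blast
  have yH: "y \<in> H" using y sub by (metis span_eq_iff)
  have ex: "y \<in> H \<and> (\<forall>w\<in>H. inner (x - y) w = 0)"
    using yH z xyz span_superset by (auto simp: orthogonal_def)
  have "oproj H x = y" unfolding oproj_def
  proof (rule the_equality)
    show "y \<in> H \<and> (\<forall>w\<in>H. inner (x - y) w = 0)" by (fact ex)
    fix y' assume h: "y' \<in> H \<and> (\<forall>w\<in>H. inner (x - y') w = 0)"
    have d: "y' - y \<in> H" using h yH sub subspace_diff by blast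
    have "inner (y' - y) (y' - y) = inner (x - y) (y' - y) - inner (x - y') (y' - y)"
      by (simp add: inner_diff_left)
    also have "\<dots> = 0" using h ex d by simp
    finally show "y' = y" by simp
  qed
  then show ?thesis using ex by simp
qed

lemma P_in[simp]: "oproj H x \<in> H" using P_char by blast
lemma P_perp: "perp H (x - oproj H x)" using P_char unfolding perp_def by blast

lemma P_unique: assumes "y \<in> H" "perp H (x - y)" shows "oproj H x = y"
proof -
  have d: "oproj H x - y \<in> H" using assms sub subspace_diff P_in by blast
  have "inner (oproj H x - y) (oproj H x - y) = inner (x - y) (oproj H x - y) - inner (x - oproj H x) (oproj H x - y)"
    by (simp add: inner_diff_left)
  also have "\<dots> = 0" using assms d P_perp[of x] unfolding perp_def by simp
  finally show ?thesis by simp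
qed

lemma perp_add: "perp H u \<Longrightarrow> perp H v \<Longrightarrow> perp H (u + v)" unfolding perp_def by (simp add: inner_add_left)
lemma perp_diff: "perp H u \<Longrightarrow> perp H v \<Longrightarrow> perp H (u - v)" unfolding perp_def by (simp add: inner_diff_left)
lemma perp_scale: "perp H u \<Longrightarrow> perp H (c *\<^sub>R u)" unfolding perp_def by (simp)

lemma P_split: "y \<in> H \<Longrightarrow> perp H q \<Longrightarrow> oproj H (y + q) = y"
  by (rule P_unique) auto
lemma P_H: "y \<in> H \<Longrightarrow> oproj H y = y"
  using P_split[of y 0] by (simp add: perp_def)
lemma P_perp0: "perp H q \<Longrightarrow> oproj H q = 0"
  using P_split[of 0 q] sub subspace_0 by auto

lemma perp_H: "perp H q \<Longrightarrow> y \<in> H \<Longrightarrow> inner q y = 0" unfolding perp_def by auto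
lemma perp_H': "perp H q \<Longrightarrow> y \<in> H \<Longrightarrow> inner y q = 0" unfolding perp_def by (auto simp: inner_commute)

lemma br_HP: "x \<in> H \<Longrightarrow> perp H q \<Longrightarrow> perp H (b x q)"
  unfolding perp_def
proof
  fix z assume "x \<in> H" "\<forall>z\<in>H. inner q z = 0" "z \<in> H"
  then have "inner (b q x) z = 0" using bi clos by simp
  then show "inner (b x q) z = 0" using anti[of x q] by simp
qed

lemma br_PH: "perp H p \<Longrightarrow> y \<in> H \<Longrightarrow> perp H (b p y)"
  unfolding perp_def using bi clos by simp

lemma jac_inner: "inner (b x p) (b y q) = inner (b x y) (b p q) - inner (b x q) (b p y)"
proof -
  have "inner (b x p) (b y q) = inner x (b p (b y q))" by (rule bi)
  also have "b p (b y q) = - b y (b q p) - b q (b p y)" using jac[of p y q] by (simp add: eq_neg_iff_add_eq_0 algebra_simps)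
  also have "inner x (- b y (b q p) - b q (b p y)) = - inner (b x y) (b q p) - inner (b x q) (b p y)"
    by (simp add: inner_diff_right bi)
  also have "b q p = - b p q" by (rule anti)
  finally show ?thesis by simp
qed


lemma P_add: "oproj H (u + v) = oproj H u + oproj H v"
proof (rule P_unique)
  show "oproj H u + oproj H v \<in> H" by (rule subspace_add[OF sub P_in P_in])
  have "perp H ((u - oproj H u) + (v - oproj H v))" using P_perp perp_add by blast
  then show "perp H (u + v - (oproj H u + oproj H v))" by (simp add: algebra_simps)
qed

lemma P_scale: "oproj H (c *\<^sub>R u) = c *\<^sub>R oproj H u"
proof (rule P_unique)
  show "c *\<^sub>R oproj H u \<in> H" using sub subspace_scale by (metis P_in)
  have "perp H (c *\<^sub>R (u - oproj H u))" using P_perp perp_scale by blast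
  then show "perp H (c *\<^sub>R u - c *\<^sub>R oproj H u)" by (simp add: algebra_simps)
qed

lemma P_diff: "oproj H (u - v) = oproj H u - oproj H v"
  using P_add[of u "-v"] P_scale[of "-1" v] by simp

end

locale liesetup_t = liesetup +
  fixes t :: real
  assumes t1: "t < 1"
begin

lemma a_pos: "1 - t > 0" using t1 by simp

lemma Phi_split: "y \<in> H \<Longrightarrow> perp H q \<Longrightarrow> Phi H t (y + q) = (1/(1-t)) *\<^sub>R y + q"
  unfolding Phi_def using P_split by simp

lemma Phi_inv_split: assumes "y \<in> H" "perp H q" shows "Phi_inv H t (y + q) = (1-t) *\<^sub>R y + q"
  unfolding Phi_inv_def P_split[OF assms] by (simp add: algebra_simps)

lemma decomp: "u = oproj H u + (u - oproj H u)" by simp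

lemma Phi_H: "y \<in> H \<Longrightarrow> Phi H t y = (1/(1-t)) *\<^sub>R y"
  using Phi_split[of y 0] by (simp add: perp_def)
lemma Phi_perp: "perp H q \<Longrightarrow> Phi H t q = q"
  using Phi_split[of 0 q] sub subspace_0 by auto
lemma Phi_inv_perp: "perp H q \<Longrightarrow> Phi_inv H t q = q"
  using Phi_inv_split[of 0 q] sub subspace_0 by auto

lemma Phi_add: "Phi H t (u + v) = Phi H t u + Phi H t v"
  unfolding Phi_def by (simp add: P_add algebra_simps)
lemma Phi_scale: "Phi H t (c *\<^sub>R u) = c *\<^sub>R Phi H t u"
  unfolding Phi_def by (simp add: P_scale algebra_simps)
lemma Phi_diff: "Phi H t (u - v) = Phi H t u - Phi H t v"
  unfolding Phi_def by (simp add: P_diff algebra_simps)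
lemma Phi_inv_add: "Phi_inv H t (u + v) = Phi_inv H t u + Phi_inv H t v"
  unfolding Phi_inv_def by (simp add: P_add algebra_simps)
lemma Phi_inv_diff: "Phi_inv H t (u - v) = Phi_inv H t u - Phi_inv H t v"
  unfolding Phi_inv_def by (simp add: P_diff algebra_simps)
lemma Phi_inv_scale: "Phi_inv H t (c *\<^sub>R u) = c *\<^sub>R Phi_inv H t u"
  unfolding Phi_inv_def by (simp add: P_scale algebra_simps)

lemma Phi_Phi_inv: "Phi H t (Phi_inv H t w) = w"
proof -
  have "Phi_inv H t w = (1-t) *\<^sub>R oproj H w + (w - oproj H w)"
    using Phi_inv_split[OF P_in[of w] P_perp[of w]] by simp
  moreover have "(1-t) *\<^sub>R oproj H w \<in> H" using sub subspace_scale by (metis P_in)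
  ultimately have "Phi H t (Phi_inv H t w) = (1/(1-t)) *\<^sub>R ((1-t) *\<^sub>R oproj H w) + (w - oproj H w)"
    using Phi_split P_perp by metis
  also have "\<dots> = w" using a_pos by simp
  finally show ?thesis .
qed

lemma Phi_inv_Phi: "Phi_inv H t (Phi H t w) = w"
proof -
  have "(1/(1-t)) *\<^sub>R oproj H w \<in> H" using sub subspace_scale by (metis P_in)
  then have "Phi_inv H t (Phi H t w) = (1-t) *\<^sub>R ((1/(1-t)) *\<^sub>R oproj H w) + (w - oproj H w)"
    unfolding Phi_def using Phi_inv_split P_perp by metis
  also have "\<dots> = w" using a_pos by simp
  finally show ?thesis .
qed

lemma Phi_inner: "inner (Phi H t u) v = (1/(1-t)) * inner (oproj H u) (oproj H v) + inner (u - oproj H u) (v - oproj H v)"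
proof -
  have v: "v = oproj H v + (v - oproj H v)" by simp
  have "inner (Phi H t u) v = inner ((1/(1-t)) *\<^sub>R oproj H u + (u - oproj H u)) (oproj H v + (v - oproj H v))"
    unfolding Phi_def by simp
  also have "\<dots> = (1/(1-t)) * inner (oproj H u) (oproj H v) + (1/(1-t)) * inner (oproj H u) (v - oproj H v)
     + inner (u - oproj H u) (oproj H v) + inner (u - oproj H u) (v - oproj H v)"
    by (simp only: inner_add_left inner_add_right inner_scaleR_left)
  also have "inner (oproj H u) (v - oproj H v) = 0" using perp_H'[OF P_perp P_in] .
  also have "inner (u - oproj H u) (oproj H v) = 0" using perp_H[OF P_perp P_in] .
  finally show ?thesis by simp
qed

lemma Phi_sym: "inner (Phi H t u) v = inner u (Phi H t v)"
proof -
  have "inner u (Phi H t v) = inner (Phi H t v) u" by (rule inner_commute)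
  then show ?thesis unfolding Phi_inner
    by (metis inner_commute)
qed

lemma ht_sym: "ht H t u v = ht H t v u"
  unfolding ht_def by (metis Phi_sym inner_commute)

definition N where "N U V = (1/2) *\<^sub>R (b U V + Phi_inv H t (b U (Phi H t V) - b (Phi H t U) V))"

lemma N_prop: "ht H t (N U V) W = (ht H t (b U V) W - ht H t (b V W) U + ht H t (b W U) V) / 2"
proof -
  have "Phi H t (N U V) = (1/2) *\<^sub>R (Phi H t (b U V) + (b U (Phi H t V) - b (Phi H t U) V))"
    unfolding N_def by (simp add: Phi_scale Phi_add Phi_Phi_inv)
  then have "ht H t (N U V) W = (inner (Phi H t (b U V)) W + inner (b U (Phi H t V)) W - inner (b (Phi H t U) V) W) / 2"
    unfolding ht_def by (simp add: inner_add_left inner_diff_left)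
  moreover have "ht H t (b V W) U = inner (b (Phi H t U) V) W"
  proof -
    have "ht H t (b V W) U = inner (b V W) (Phi H t U)" unfolding ht_def by (rule Phi_sym)
    also have "\<dots> = inner (Phi H t U) (b V W)" by (rule inner_commute)
    also have "\<dots> = inner (b (Phi H t U) V) W" by (rule bi[symmetric])
    finally show ?thesis .
  qed
  moreover have "ht H t (b W U) V = inner (b U (Phi H t V)) W"
  proof -
    have "ht H t (b W U) V = inner (b W U) (Phi H t V)" unfolding ht_def by (rule Phi_sym)
    also have "\<dots> = inner W (b U (Phi H t V))" by (rule bi)
    also have "\<dots> = inner (b U (Phi H t V)) W" by (rule inner_commute)
    finally show ?thesis .
  qed
  ultimately show ?thesis unfolding ht_def by simp
qed

lemma nabla_eq: "lc_nabla b (ht H t) U V = N U V"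
  unfolding lc_nabla_def
proof (rule the_equality)
  show "\<forall>W. ht H t (N U V) W = (ht H t (b U V) W - ht H t (b V W) U + ht H t (b W U) V) / 2"
    using N_prop by blast
  fix Z assume h: "\<forall>W. ht H t Z W = (ht H t (b U V) W - ht H t (b V W) U + ht H t (b W U) V) / 2"
  have e: "\<And>W. inner (Phi H t Z) W = inner (Phi H t (N U V)) W"
    using h N_prop unfolding ht_def by metis
  have "inner (Phi H t Z - Phi H t (N U V)) (Phi H t Z - Phi H t (N U V)) = 0"
    by (simp add: inner_diff_left e)
  then have "Phi H t Z - Phi H t (N U V) = 0" by simp
  then have "Phi_inv H t (Phi H t Z) = Phi_inv H t (Phi H t (N U V))" by simp
  then show "Z = N U V" by (simp add: Phi_inv_Phi)
qed


lemma ht_diff: "ht H t (u - v) w = ht H t u w - ht H t v w"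
  unfolding ht_def by (simp add: Phi_diff inner_diff_left)
lemma ht_neg: "ht H t (- u) w = - ht H t u w"
  unfolding ht_def using Phi_scale[of "-1" u] by simp
lemma ht_zero: "ht H t 0 w = 0"
  unfolding ht_def using Phi_scale[of 0 0] by simp

lemma kappa_main:
  "kappa b H X Y t =
              (1/4) * (norm (b X Y))^2
            - (3/4) * (norm (oproj H (b X Y)))^2 * t
            + (3/4) * (norm (b (oproj H X) (oproj H Y)))^2 * t^2
            - (1/4) * (norm (b (oproj H X) (oproj H Y)))^2 * t^3
            - (3/4) * (norm (oproj H (b (X - oproj H X) (Y - oproj H Y))))^2 * (t^2 / (1 - t))"
proof -
  define x where "x = oproj H X"
  define p where "p = X - x"
  define y where "y = oproj H Y"
  define q where "q = Y - y"
  define a where "a = 1 - t"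
  have xH: "x \<in> H" and yH: "y \<in> H" unfolding x_def y_def by simp_all
  have pP: "perp H p" and qP: "perp H q" unfolding p_def q_def x_def y_def using P_perp by simp_all
  have X: "X = x + p" and Y: "Y = y + q" unfolding p_def q_def by simp_all
  define A where "A = Phi_inv H t X"
  define B where "B = Phi_inv H t Y"
  have hA: "A = a *\<^sub>R x + p" unfolding A_def a_def X using Phi_inv_split[OF xH pP] .
  have hB: "B = a *\<^sub>R y + q" unfolding B_def a_def Y using Phi_inv_split[OF yH qP] .
  have PA: "Phi H t A = X" unfolding A_def by (rule Phi_Phi_inv)
  have PB: "Phi H t B = Y" unfolding B_def by (rule Phi_Phi_inv)
  have htA: "\<And>u. ht H t u A = inner u X" unfolding ht_def using Phi_sym PA by metis
  have htB: "\<And>u. ht H t u B = inner u Y" unfolding ht_def using Phi_sym PB by metis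
  define C where "C = b A B"
  define D where "D = b p y - b x q"
  have perpD: "perp H D" unfolding D_def by (rule perp_diff[OF br_PH[OF pP yH] br_HP[OF xH qP]])
  have perpyq: "perp H (b y q)" by (rule br_HP[OF yH qP])
  have S1: "b A X = (-t) *\<^sub>R b x p"
    unfolding hA X by (simp add: bsimps anti[of p x] a_def algebra_simps)
  have S2: "b B Y = (-t) *\<^sub>R b y q"
    unfolding hB Y by (simp add: bsimps anti[of q y] a_def algebra_simps)
  have S3: "b B X + b A Y = t *\<^sub>R D"
    unfolding hA hB X Y D_def by (simp add: bsimps anti[of y x] anti[of y p] anti[of q x] anti[of q p] a_def algebra_simps)
  have S4: "b A Y - b B X = (2*a) *\<^sub>R b x y + (a+1) *\<^sub>R (b x q + b p y) + 2 *\<^sub>R b p q"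
  proof -
    have e1: "b A Y = a *\<^sub>R b x y + a *\<^sub>R b x q + b p y + b p q" unfolding hA Y by (simp add: bsimps)
    have e2: "b B X = - (a *\<^sub>R b x y) - a *\<^sub>R b p y - b x q - b p q"
      unfolding hB X by (simp add: bsimps anti[of y x] anti[of y p] anti[of q x] anti[of q p])
    have e3: "(2*a) *\<^sub>R b x y = a *\<^sub>R b x y + a *\<^sub>R b x y" by (metis mult_2 scaleR_left_distrib)
    have e4: "(a+1) *\<^sub>R (b x q + b p y) = a *\<^sub>R b x q + a *\<^sub>R b p y + b x q + b p y" by (simp add: algebra_simps)
    have e5: "2 *\<^sub>R b p q = b p q + b p q" by (rule scaleR_2)
    show ?thesis unfolding e1 e2 e3 e4 e5 by (simp add: algebra_simps)
  qed
  have S5: "C = a^2 *\<^sub>R b x y + a *\<^sub>R b x q + a *\<^sub>R b p y + b p q"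
    unfolding C_def hA hB by (simp add: bsimps algebra_simps power2_eq_square)
  have S6: "b A Y - b X B = t *\<^sub>R D"
    using S3 anti[of X B] by (simp add: algebra_simps)
  have Z1: "N B B = (-t) *\<^sub>R b y q"
  proof -
    have "b B Y - b Y B = 2 *\<^sub>R b B Y" using anti[of Y B] by (simp add: scaleR_2)
    then have "N B B = (1/2) *\<^sub>R Phi_inv H t (2 *\<^sub>R b B Y)" unfolding N_def PB by simp
    also have "\<dots> = b B Y"
    proof -
      have pv: "perp H (2 *\<^sub>R b B Y)" unfolding S2 using perpyq perp_scale by metis
      show ?thesis unfolding Phi_inv_perp[OF pv] by simp
    qed
    finally show ?thesis using S2 by simp
  qed
  have Z2: "N A B = (1/2) *\<^sub>R C + (t/2) *\<^sub>R D"
  proof -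
    have "N A B = (1/2) *\<^sub>R (C + Phi_inv H t (t *\<^sub>R D))" unfolding N_def PA PB C_def S6 by simp
    also have "\<dots> = (1/2) *\<^sub>R C + (t/2) *\<^sub>R D" by (simp add: Phi_inv_perp[OF perp_scale[OF perpD]] algebra_simps)
    finally show ?thesis .
  qed
  have T1: "ht H t (N A (N B B)) A = - (t^2) * inner (b y q) (b x p)"
  proof -
    have "ht H t (N A (N B B)) A = (ht H t (b A (N B B)) A - ht H t (b (N B B) A) A + ht H t (b A A) (N B B)) / 2"
      by (rule N_prop)
    also have "\<dots> = (inner (b A (N B B)) X - inner (b (N B B) A) X + ht H t (b A A) (N B B)) / 2"
      unfolding htA ..
    also have "\<dots> = - inner (N B B) (b A X)"
    proof -
      have a1: "inner (b (N B B) A) X = inner (N B B) (b A X)" by (rule bi)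
      have a2: "inner (b A (N B B)) X = - inner (N B B) (b A X)" using anti[of A "N B B"] a1 by simp
      show ?thesis unfolding a1 a2 bself ht_zero by simp
    qed
    also have "\<dots> = - (t^2) * inner (b y q) (b x p)"
      unfolding Z1 S1 by (simp add: power2_eq_square)
    finally show ?thesis .
  qed
  have T2: "ht H t (N B (N A B)) A = (1/4) * ht H t C C - (t^2/4) * inner D D"
  proof -
    have "ht H t (N B (N A B)) A = (ht H t (b B (N A B)) A - ht H t (b (N A B) A) B + ht H t (b A B) (N A B)) / 2"
      by (rule N_prop)
    also have "\<dots> = (inner (b B (N A B)) X - inner (b (N A B) A) Y + ht H t (b A B) (N A B)) / 2"
      unfolding htA htB ..
    also have "inner (b B (N A B)) X - inner (b (N A B) A) Y = - inner (N A B) (b B X + b A Y)"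
    proof -
      have c1: "inner (b (N A B) B) X = inner (N A B) (b B X)" by (rule bi)
      have c2: "inner (b B (N A B)) X = - inner (N A B) (b B X)" using anti[of B "N A B"] c1 by simp
      have c3: "inner (b (N A B) A) Y = inner (N A B) (b A Y)" by (rule bi)
      show ?thesis unfolding c2 c3 by (simp add: inner_add_right)
    qed
    also have "\<dots> = - t * inner (N A B) D" unfolding S3 by simp
    also have "inner (N A B) D = (1/2) * inner C D + (t/2) * inner D D"
      unfolding Z2 by (simp add: inner_add_left)
    also have "ht H t (b A B) (N A B) = (1/2) * ht H t C C + (t/2) * inner C D"
    proof -
      have "inner (Phi H t C) D = inner C D" using Phi_sym Phi_perp[OF perpD] by metis
      then show ?thesis unfolding Z2 ht_def C_def by (simp add: inner_add_right)
    qed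
    finally show ?thesis by (simp add: algebra_simps power2_eq_square)
  qed
  have T3: "ht H t (N C B) A = (ht H t C C - inner C (b A Y - b B X)) / 2"
  proof -
    have "ht H t (N C B) A = (ht H t (b C B) A - ht H t (b B A) C + ht H t (b A C) B) / 2"
      by (rule N_prop)
    also have "\<dots> = (inner (b C B) X - ht H t (b B A) C + inner (b A C) Y) / 2"
      unfolding htA htB ..
    also have "b B A = - C" unfolding C_def by (rule anti)
    also have "inner (b A C) Y = - inner C (b A Y)"
    proof -
      have d1: "inner (b C A) Y = inner C (b A Y)" by (rule bi)
      show ?thesis using anti[of A C] d1 by simp
    qed
    finally show ?thesis by (simp add: ht_neg bi inner_diff_right)
  qed
  have K: "kappa b H X Y t = - (t^2) * inner (b y q) (b x p) - (3/4) * ht H t C C + (t^2/4) * inner D D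
      + (1/2) * inner C (b A Y - b B X)"
  proof -
    have "kappa b H X Y t = ht H t (N A (N B B)) A - ht H t (N B (N A B)) A - ht H t (N C B) A"
      unfolding kappa_def sec_curv_def curv_def nabla_eq A_def[symmetric] B_def[symmetric] C_def[symmetric] ht_diff ..
    then show ?thesis unfolding T1 T2 T3 inner_diff_right by (simp add: field_simps)
  qed
  define u1 where "u1 = b x y"
  define u2 where "u2 = b x q"
  define u3 where "u3 = b p y"
  define r where "r = oproj H (b p q)"
  define R where "R = b p q - r"
  have u1H: "u1 \<in> H" unfolding u1_def by (rule clos[OF xH yH])
  have rH: "r \<in> H" unfolding r_def by simp
  have u2P: "perp H u2" unfolding u2_def by (rule br_HP[OF xH qP])
  have u3P: "perp H u3" unfolding u3_def by (rule br_PH[OF pP yH])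
  have RP: "perp H R" unfolding R_def r_def by (rule P_perp)
  have pq: "b p q = r + R" unfolding R_def by simp
  have ip1: "inner (b y q) (b x p) = inner u1 (r + R) - inner u2 u3"
    unfolding u1_def u2_def u3_def pq[symmetric] using jac_inner[of x p y q] by (simp add: inner_commute)
  have Csplit: "C = (a^2 *\<^sub>R u1 + r) + (a *\<^sub>R u2 + a *\<^sub>R u3 + R)"
    unfolding S5 pq u1_def u2_def u3_def by (simp add: algebra_simps)
  have hH: "a^2 *\<^sub>R u1 + r \<in> H" using sub u1H rH subspace_add subspace_scale by metis
  have hP: "perp H (a *\<^sub>R u2 + a *\<^sub>R u3 + R)" using u2P u3P RP perp_add perp_scale by metis
  have hC: "ht H t C C = inner ((1/a) *\<^sub>R (a^2 *\<^sub>R u1 + r) + (a *\<^sub>R u2 + a *\<^sub>R u3 + R)) ((a^2 *\<^sub>R u1 + r) + (a *\<^sub>R u2 + a *\<^sub>R u3 + R))"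
    unfolding ht_def Csplit Phi_split[OF hH hP, folded a_def] ..
  have hD: "D = u3 - u2" unfolding D_def u2_def u3_def ..
  have hCD: "inner C (b A Y - b B X) = inner ((a^2 *\<^sub>R u1 + r) + (a *\<^sub>R u2 + a *\<^sub>R u3 + R)) ((2*a) *\<^sub>R u1 + (a+1) *\<^sub>R (u2 + u3) + 2 *\<^sub>R (r + R))"
    unfolding Csplit S4 pq u1_def u2_def u3_def ..
  have XY: "b X Y = u1 + u2 + u3 + r + R"
    unfolding X Y u1_def u2_def u3_def by (simp add: bsimps pq algebra_simps)
  have XY2: "b X Y = (u1 + r) + (u2 + u3 + R)"
    unfolding XY by (simp add: algebra_simps)
  have PXY: "oproj H (b X Y) = u1 + r"
    unfolding XY2 by (rule P_split) (use u1H rH sub subspace_add u2P u3P RP perp_add in metis)+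
  have e1: "(norm (b X Y))^2 = inner (u1 + u2 + u3 + r + R) (u1 + u2 + u3 + r + R)"
    unfolding XY power2_norm_eq_inner ..
  have e2: "(norm (oproj H (b X Y)))^2 = inner (u1 + r) (u1 + r)"
    unfolding PXY power2_norm_eq_inner ..
  have e3: "(norm (b (oproj H X) (oproj H Y)))^2 = inner u1 u1"
    unfolding u1_def x_def y_def power2_norm_eq_inner ..
  have e4: "(norm (oproj H (b (X - oproj H X) (Y - oproj H Y))))^2 = inner r r"
    unfolding r_def p_def q_def x_def y_def power2_norm_eq_inner ..
  have fin: "- (t^2) * (inner u1 (r + R) - inner u2 u3)
     - (3/4) * inner ((1/a) *\<^sub>R (a^2 *\<^sub>R u1 + r) + (a *\<^sub>R u2 + a *\<^sub>R u3 + R)) ((a^2 *\<^sub>R u1 + r) + (a *\<^sub>R u2 + a *\<^sub>R u3 + R))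
     + (t^2/4) * inner (u3 - u2) (u3 - u2)
     + (1/2) * inner ((a^2 *\<^sub>R u1 + r) + (a *\<^sub>R u2 + a *\<^sub>R u3 + R)) ((2*a) *\<^sub>R u1 + (a+1) *\<^sub>R (u2 + u3) + 2 *\<^sub>R (r + R))
   = (1/4) * inner (u1 + u2 + u3 + r + R) (u1 + u2 + u3 + r + R)
     - (3/4) * inner (u1 + r) (u1 + r) * t + (3/4) * inner u1 u1 * t^2 - (1/4) * inner u1 u1 * t^3
     - (3/4) * inner r r * (t^2 / (1 - t))"
    by (rule final_scalar[OF a_def t1 perp_H'[OF u2P u1H] perp_H'[OF u3P u1H] perp_H'[OF RP u1H]
          perp_H'[OF u2P rH] perp_H'[OF u3P rH] perp_H'[OF RP rH]])
  show ?thesis unfolding K e1 e2 e3 e4 ip1 hC hD[symmetric] hCD[symmetric] using fin unfolding hD[symmetric] hCD .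
qed

end

lemma (in liesetup) abel_proj:
  assumes ab: "\<forall>x\<in>H. \<forall>y\<in>H. b x y = 0"
  shows "oproj H (b X Y) = oproj H (b (X - oproj H X) (Y - oproj H Y))"
    and "b (oproj H X) (oproj H Y) = 0"
proof -
  define x where "x = oproj H X"
  define p where "p = X - x"
  define y where "y = oproj H Y"
  define q where "q = Y - y"
  have xH: "x \<in> H" and yH: "y \<in> H" unfolding x_def y_def by simp_all
  have pP: "perp H p" and qP: "perp H q" unfolding p_def q_def x_def y_def using P_perp by simp_all
  have X: "X = x + p" and Y: "Y = y + q" unfolding p_def q_def by simp_all
  have "b X Y = b x y + b x q + b p y + b p q" unfolding X Y by (simp add: bsimps)
  then have "oproj H (b X Y) = oproj H (b x y) + oproj H (b x q) + oproj H (b p y) + oproj H (b p q)"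
    by (simp add: P_add)
  also have "\<dots> = oproj H (b p q)"
    using ab xH yH P_perp0[OF br_HP[OF xH qP]] P_perp0[OF br_PH[OF pP yH]] P_H[OF subspace_0[OF sub]] by simp
  finally show "oproj H (b X Y) = oproj H (b (X - oproj H X) (Y - oproj H Y))"
    unfolding p_def q_def x_def y_def .
  show "b (oproj H X) (oproj H Y) = 0" using ab by simp
qed

theorem mainTheorem7:
  fixes b :: "'a::euclidean_space \<Rightarrow> 'a \<Rightarrow> 'a" and H :: "'a set"
  assumes "lie_bracket b" and "bi_invariant b" and "lie_subalgebra b H"
  shows "(\<forall>X Y t. t < 1 \<longrightarrow>
            kappa b H X Y t =
              (1/4) * (norm (b X Y))^2
            - (3/4) * (norm (oproj H (b X Y)))^2 * t
            + (3/4) * (norm (b (oproj H X) (oproj H Y)))^2 * t^2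
            - (1/4) * (norm (b (oproj H X) (oproj H Y)))^2 * t^3
            - (3/4) * (norm (oproj H (b (X - oproj H X) (Y - oproj H Y))))^2 * (t^2 / (1 - t)))
       \<and> ((\<forall>x\<in>H. \<forall>y\<in>H. b x y = 0) \<longrightarrow>
            (\<forall>X Y t. t < 1 \<longrightarrow>
              kappa b H X Y t =
                (1/4) * (norm (b X Y))^2 - (3/4) * (norm (oproj H (b X Y)))^2 * (t / (1 - t))))"
proof -
  interpret L: liesetup b H using assms by (unfold_locales)
  have main: "\<And>X Y t. t < 1 \<Longrightarrow>
            kappa b H X Y t =
              (1/4) * (norm (b X Y))^2
            - (3/4) * (norm (oproj H (b X Y)))^2 * t
            + (3/4) * (norm (b (oproj H X) (oproj H Y)))^2 * t^2
            - (1/4) * (norm (b (oproj H X) (oproj H Y)))^2 * t^3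
            - (3/4) * (norm (oproj H (b (X - oproj H X) (Y - oproj H Y))))^2 * (t^2 / (1 - t))"
  proof -
    fix X Y :: "'a" and t :: real
    assume t: "t < 1"
    interpret LT: liesetup_t b H t using assms t by (unfold_locales)
    show "kappa b H X Y t =
              (1/4) * (norm (b X Y))^2
            - (3/4) * (norm (oproj H (b X Y)))^2 * t
            + (3/4) * (norm (b (oproj H X) (oproj H Y)))^2 * t^2
            - (1/4) * (norm (b (oproj H X) (oproj H Y)))^2 * t^3
            - (3/4) * (norm (oproj H (b (X - oproj H X) (Y - oproj H Y))))^2 * (t^2 / (1 - t))"
      by (rule LT.kappa_main)
  qed
  show ?thesis
  proof (intro conjI impI allI)
    fix X Y and t :: real assume "t < 1" then show "kappa b H X Y t =
              (1/4) * (norm (b X Y))^2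
            - (3/4) * (norm (oproj H (b X Y)))^2 * t
            + (3/4) * (norm (b (oproj H X) (oproj H Y)))^2 * t^2
            - (1/4) * (norm (b (oproj H X) (oproj H Y)))^2 * t^3
            - (3/4) * (norm (oproj H (b (X - oproj H X) (Y - oproj H Y))))^2 * (t^2 / (1 - t))"
      by (rule main)
  next
    fix X Y and t :: real
    assume ab: "\<forall>x\<in>H. \<forall>y\<in>H. b x y = 0" and t: "t < 1"
    have t0: "1 - t \<noteq> 0" using t by simp
    have "kappa b H X Y t = (1/4) * (norm (b X Y))^2 - (3/4) * (norm (oproj H (b X Y)))^2 * t
       - (3/4) * (norm (oproj H (b X Y)))^2 * (t^2 / (1 - t))"
      using main[OF t, of X Y] L.abel_proj[OF ab, of X Y] by simp
    also have "\<dots> = (1/4) * (norm (b X Y))^2 - (3/4) * (norm (oproj H (b X Y)))^2 * (t / (1 - t))"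
      using t0 by (simp add: field_simps power2_eq_square)
    finally show "kappa b H X Y t = (1/4) * (norm (b X Y))^2 - (3/4) * (norm (oproj H (b X Y)))^2 * (t / (1 - t))" .
  qed
qed

end
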